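(* Let $n>1$ be an odd integer and let $M$ be either $(n+1)/2$ or $n-1$. Then \[ \sum_{k=0}^{M}[4k-1]\frac{(aq^{-1},q^{-1}/a,q^{-1}/b,cq^{-1},dq^{-1},q^{-1};q^2)_k}{(q^2/a,aq^2,bq^2,q^2/c,q^2/d,q^2;q^2)_k}\bigg(\frac{bq^7}{cd}\bigg)^k \equiv0\pmod{\Phi_n(q)}. \]
   Context: Here $q,a,b,c,d$ are indeterminates. The $q$-shifted factorial is $(x;q)_0=1$, $(x;q)_k=(1-x)(1-xq)\cdots(1-xq^{k-1})$ for $k\ge1$, and $(x_1,\dots,x_m;q)_k=(x_1;q)_k\cdots(x_m;q)_k$. The $q$-integer is $[m]=(1-q^m)/(1-q)$, and $\Phi_n(q)$ is the $n$-th cyclotomic polynomial in $q$. A congruence $A\equiv B$ modulo a polynomial $P$ between rational functions means that $A-B$ is a rational function whose numerator is divisible by $P$ and whose denominator is coprime to $P$. *)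

theory Defs
  imports "HOL-Computational_Algebra.Computational_Algebra"
begin

text \<open>Cyclotomic polynomials over the integers, via X^n - 1 = prod over d dvd n of Phi_d.\<close>
function cyclo :: "nat \<Rightarrow> int poly" where
  "cyclo n = (if n = 0 then 1 else
      (monom 1 n - 1) div (\<Prod>d\<in>{d. d dvd n \<and> d < n}. cyclo d))"
  by auto
termination
  by (relation "measure id") auto

definition qpoch :: "'a::field \<Rightarrow> 'a \<Rightarrow> nat \<Rightarrow> 'a" where
  "qpoch x q k = (\<Prod>j<k. 1 - x * q ^ j)"

definition qint :: "'a::field \<Rightarrow> int \<Rightarrow> 'a" where
  "qint q m = (1 - q powi m) / (1 - q)"

definition cong_rf :: "'a::field poly fract \<Rightarrow> 'a poly fract \<Rightarrow> 'a poly \<Rightarrow> bool" where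
  "cong_rf A B P \<longleftrightarrow> (\<exists>N D. D \<noteq> 0 \<and> A - B = Fract N D \<and> P dvd N \<and> coprime D P)"

text \<open>Coefficient field K = Q(a,b,c,d) as fraction field of Q[d][c][b][a].\<close>
type_synonym coeffK = "rat poly poly poly poly fract"
type_synonym ratfun = "coeffK poly fract"

definition ind_a :: coeffK where "ind_a = to_fract [:0, 1:]"
definition ind_b :: coeffK where "ind_b = to_fract [:[:0, 1:]:]"
definition ind_c :: coeffK where "ind_c = to_fract [:[:[:0, 1:]:]:]"
definition ind_d :: coeffK where "ind_d = to_fract [:[:[:[:0, 1:]:]:]:]"

definition Q :: ratfun where "Q = to_fract [:0, 1:]"
definition A :: ratfun where "A = to_fract [:ind_a:]"
definition B :: ratfun where "B = to_fract [:ind_b:]"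
definition C :: ratfun where "C = to_fract [:ind_c:]"
definition D :: ratfun where "D = to_fract [:ind_d:]"

end

theory Submission
  imports Defs
begin


declare cyclo.simps[simp del]

definition xm :: "nat \<Rightarrow> 'a::comm_ring_1 poly" where "xm n = monom 1 n - 1"

lemma mp_mult: "map_poly (of_int::int\<Rightarrow>'a::comm_ring_1) (p * q) = map_poly of_int p * map_poly of_int q"
  by (intro poly_eqI) (simp add: coeff_map_poly coeff_mult)

lemma mp_prod: "map_poly (of_int::int\<Rightarrow>'a::comm_ring_1) (\<Prod>i\<in>S. f i) = (\<Prod>i\<in>S. map_poly of_int (f i))"
  by (induction S rule: infinite_finite_induct) (simp_all add: mp_mult)

lemma mp_xm: "map_poly (of_int::int\<Rightarrow>'a::comm_ring_1) (xm n) = xm n"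
  by (intro poly_eqI) (simp add: coeff_map_poly xm_def coeff_monom)

lemma ext_euclid:
  fixes a b :: "'a::field poly"
  shows "\<exists>u v. (u*a + v*b) dvd a \<and> (u*a + v*b) dvd b"
proof (induction "if b = 0 then 0 else Suc (degree b)" arbitrary: a b rule: less_induct)
  case less
  show ?case
  proof (cases "b = 0")
    case True
    then show ?thesis by (intro exI[of _ 1] exI[of _ 0]) simp
  next
    case False
    define r where "r = a mod b"
    have lt: "(if r = 0 then 0 else Suc (degree r)) < (if b = 0 then 0 else Suc (degree b))"
      using False degree_mod_less[of b a] by (auto simp: r_def)
    from less[OF lt] obtain u v where uv: "(u*b + v*r) dvd b" "(u*b + v*r) dvd r" by blast
    have r_eq: "r = a - (a div b) * b" by (simp add: r_def mod_div_mult_eq minus_div_mult_eq_mod)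
    have e: "u*b + v*r = v*a + (u - v*(a div b))*b" by (simp add: r_eq algebra_simps)
    have "(u*b + v*r) dvd (a div b) * b + r" using uv by (intro dvd_add dvd_mult) auto
    then have "(u*b + v*r) dvd a" by (simp add: r_def)
    with uv e show ?thesis by metis
  qed
qed

lemma coprime_bezout:
  fixes a b :: "'a::field poly"
  assumes "coprime a b" shows "\<exists>u v. u*a + v*b = 1"
proof -
  obtain u v where uv: "(u*a+v*b) dvd a" "(u*a+v*b) dvd b" using ext_euclid by blast
  with assms have "is_unit (u*a+v*b)" by (auto simp: coprime_def)
  then obtain w where "1 = (u*a+v*b)*w" by (auto elim: dvdE)
  then show ?thesis by (intro exI[of _ "w*u"] exI[of _ "w*v"]) (simp add: algebra_simps)
qed

lemma bezout_coprime: "u*a + v*b = 1 \<Longrightarrow> coprime a (b::'a::field poly)"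
proof (rule coprimeI)
  fix c assume "u*a + v*b = 1" "c dvd a" "c dvd b"
  then have "c dvd u*a + v*b" by (intro dvd_add dvd_mult) 
  then show "is_unit c" using \<open>u*a + v*b = 1\<close> by simp
qed

lemma sqfree_xm:
  fixes h :: "'a::field poly"
  assumes "h * h dvd xm n" "of_nat n \<noteq> (0::'a)"
  shows "is_unit h"
proof -
  obtain g where g: "xm n = h*h*g" using assms(1) by (auto elim: dvdE)
  have n0: "n \<ge> 1" using assms(2) by (cases n) auto
  have "pderiv (xm n :: 'a poly) = monom (of_nat n) (n - 1)" unfolding xm_def pderiv_diff pderiv_monom pderiv_1 by simp
  moreover have "pderiv (h*h*g) = h * (h * pderiv g + 2 * g * pderiv h)"
    by (simp add: pderiv_mult algebra_simps)
  ultimately have "h dvd monom (of_nat n) (n - 1)" using g by (metis dvd_triv_left)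
  then have "h dvd monom (of_nat n) (n - 1) * monom 1 1" by (rule dvd_mult2)
  also have "monom (of_nat n) (n - 1) * monom 1 1 = monom (of_nat n) n" using n0 by (simp add: mult_monom)
  finally have h1: "h dvd monom (of_nat n) n" .
  have "h dvd smult (of_nat n) (xm n)" using assms(1) by (metis dvd_mult_left dvd_smult)
  then have h2: "h dvd monom (of_nat n) n - [:of_nat n:]" by (simp add: xm_def smult_diff_right smult_monom)
  have "h dvd monom (of_nat n) n - (monom (of_nat n) n - [:of_nat n:])" using h1 h2 by (rule dvd_diff)
  then have "h dvd [:of_nat n:]" by simp
  moreover have "is_unit [:(of_nat n::'a):]" using assms(2) by (simp add: is_unit_const_poly_iff) (metis dvdI right_inverse)
  ultimately show ?thesis using dvd_unit_imp_unit by blast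
qed

lemma xm_step: "b \<le> a \<Longrightarrow> xm a = monom 1 (a-b) * xm b + (xm (a-b) :: 'a::comm_ring_1 poly)"
  by (simp add: xm_def algebra_simps mult_monom)

lemma xm_dvd_gcd:
  fixes h :: "'a::comm_ring_1 poly"
  shows "h dvd xm a \<Longrightarrow> h dvd xm b \<Longrightarrow> h dvd xm (gcd a b)"
proof (induction "a+b" arbitrary: a b rule: less_induct)
  case less
  show ?case
  proof (cases "a = 0 \<or> b = 0")
    case True
    then show ?thesis using less.prems by auto
  next
    case False
    show ?thesis
    proof (cases "b \<le> a")
      case True
      have "h dvd xm a - monom 1 (a-b) * xm b" using less.prems by (intro dvd_diff) auto
      then have "h dvd xm (a-b)" using xm_step[OF True, where 'a='a] by simp
      then have "h dvd xm (gcd (a-b) b)" using less.hyps[of "a-b" b] False less.prems by auto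
      then show ?thesis using gcd_diff1_nat[OF True] by simp
    next
      case F2: False
      then have ab: "a \<le> b" by simp
      have "h dvd xm b - monom 1 (b-a) * xm a" using less.prems by (intro dvd_diff) auto
      then have "h dvd xm (b-a)" using xm_step[OF ab, where 'a='a] by simp
      then have "h dvd xm (gcd a (b-a))" using less.hyps[of a "b-a"] False less.prems by auto
      then show ?thesis using gcd_diff1_nat[OF ab] by (simp add: gcd.commute)
    qed
  qed
qed

lemma one_dvd_pow: "(x::'a::comm_ring_1) - 1 dvd x^k - 1"
proof (induction k)
  case (Suc k)
  have "x^Suc k - 1 = x * (x^k - 1) + (x - 1)" by (simp add: algebra_simps)
  then show ?case using Suc by (metis dvd_add dvd_mult dvd_refl)
qed simp

lemma xm_dvd: "d dvd n \<Longrightarrow> (xm d :: 'a::comm_ring_1 poly) dvd xm n"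
proof -
  assume "d dvd n" then obtain k where "n = d*k" by auto
  then have "xm n = (monom 1 d)^k - (1::'a poly)" by (simp add: xm_def monom_power)
  then show ?thesis using one_dvd_pow[of "monom (1::'a) d" k] by (simp add: xm_def)
qed

lemma coprime_mult_field:
  fixes a b c :: "'a::field poly"
  assumes "coprime a b" "coprime a c" shows "coprime a (b*c)"
proof -
  obtain u1 v1 where 1: "u1*a + v1*b = 1" using coprime_bezout[OF assms(1)] by blast
  obtain u2 v2 where 2: "u2*a + v2*c = 1" using coprime_bezout[OF assms(2)] by blast
  have "(u1*a + v1*b) * (u2*a + v2*c) = 1" using 1 2 by simp
  then have "(u1*u2*a + u1*v2*c + v1*b*u2) * a + (v1*v2) * (b*c) = 1" by (simp add: algebra_simps)
  then show ?thesis by (rule bezout_coprime)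
qed

lemma coprime_prod_field:
  fixes f :: "'b \<Rightarrow> 'a::field poly"
  shows "(\<And>i. i \<in> S \<Longrightarrow> coprime a (f i)) \<Longrightarrow> coprime a (\<Prod>i\<in>S. f i)"
  by (induction S rule: infinite_finite_induct) (auto intro: coprime_mult_field)

lemma coprime_dvd_mult_field:
  fixes a b c :: "'a::field poly"
  assumes "coprime a b" "a dvd c" "b dvd c" shows "a*b dvd c"
proof -
  obtain u v where 1: "u*a + v*b = 1" using coprime_bezout[OF assms(1)] by blast
  obtain k where k: "c = a*k" using assms(2) by blast
  obtain l where l: "c = b*l" using assms(3) by blast
  have e1: "u*a*c = u*a*(b*l)" using l by simp
  have e2: "v*b*c = v*b*(a*k)" using k by simp
  have "c = c * (u*a + v*b)" using 1 by simp
  also have "\<dots> = u*a*c + v*b*c" by (simp add: algebra_simps)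
  also have "\<dots> = (a*b) * (u*l + v*k)" unfolding e1 e2 by (simp add: algebra_simps)
  finally show ?thesis by (rule dvdI)
qed

lemma prod_dvd_coprime:
  fixes f :: "'b \<Rightarrow> 'a::field poly"
  assumes "finite S" "\<And>i. i \<in> S \<Longrightarrow> f i dvd c"
    "\<And>i j. i \<in> S \<Longrightarrow> j \<in> S \<Longrightarrow> i \<noteq> j \<Longrightarrow> coprime (f i) (f j)"
  shows "(\<Prod>i\<in>S. f i) dvd c"
  using assms
proof (induction S rule: finite_induct)
  case (insert x S)
  have "coprime (f x) (\<Prod>i\<in>S. f i)"
    using insert.prems(2) insert.hyps(2) by (intro coprime_prod_field) auto
  moreover have "(\<Prod>i\<in>S. f i) dvd c" using insert by auto
  ultimately show ?case using insert.hyps insert.prems(1) by (simp add: coprime_dvd_mult_field)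
qed simp

lemma of_int_fract: "(of_int k :: int fract) = to_fract k"
proof -
  obtain a b where "k = int a - int b" by (metis int_diff_cases)
  then show ?thesis by (simp add: of_nat_fract to_fract_def)
qed

lemma mp_fract: "map_poly (of_int :: int \<Rightarrow> int fract) p = fract_poly p"
  by (simp add: of_int_fract[abs_def])

lemma lead_xm: "n > 0 \<Longrightarrow> lead_coeff (xm n :: 'a::comm_ring_1 poly) = 1"
proof -
  assume n: "n > 0"
  have "xm n = monom (1::'a) n + (-1)" by (simp add: xm_def)
  moreover have "degree (-1 :: 'a poly) < degree (monom (1::'a) n)"
    using n by (simp add: degree_monom_eq)
  ultimately show ?thesis by (metis lead_coeff_add_le add.commute lead_coeff_monom)
qed

lemma divisors_split: "d > 0 \<Longrightarrow> {e::nat. e dvd d} = insert d {e. e dvd d \<and> e < d}"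
  by (auto dest: dvd_imp_le)

lemma fin_divs: "finite {e::nat. e dvd d \<and> e < d}"
  by (rule finite_subset[of _ "{..<d}"]) auto

lemma prod_divs_split: "(d::nat) > 0 \<Longrightarrow> (\<Prod>e | e dvd d. f e) = f d * (\<Prod>e | e dvd d \<and> e < d. f e)"
proof -
  assume "d > 0"
  then have "(\<Prod>e | e dvd d. f e) = prod f (insert d {e. e dvd d \<and> e < d})"
    by (subst divisors_split[OF \<open>d > 0\<close>]) (rule refl)
  also have "\<dots> = f d * (\<Prod>e | e dvd d \<and> e < d. f e)" by (rule prod.insert[OF fin_divs]) simp
  finally show ?thesis .
qed

lemma cyclo_prod: "n > 0 \<Longrightarrow> (\<Prod>d | d dvd n. cyclo d) = xm n \<and> lead_coeff (cyclo n) = 1"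
proof (induction n rule: less_induct)
  case (less n)
  define S where "S = {d. d dvd n \<and> d < n}"
  have finS: "finite S" unfolding S_def by (rule fin_divs)
  have S0: "\<And>d. d \<in> S \<Longrightarrow> 0 < d" using less.prems by (auto simp: S_def intro: Nat.gr0I)
  have IH: "\<And>d. 0 < d \<Longrightarrow> d < n \<Longrightarrow> (\<Prod>e | e dvd d. cyclo e) = xm d \<and> lead_coeff (cyclo d) = 1"
    using less.IH by blast
  define \<phi> where "\<phi> d = (map_poly of_int (cyclo d) :: int fract poly)" for d
  have IHm: "(\<Prod>e | e dvd d. \<phi> e) = xm d" if "0 < d" "d < n" for d
  proof -
    have "(\<Prod>e | e dvd d. \<phi> e) = map_poly of_int (\<Prod>e | e dvd d. cyclo e)"
      by (simp add: \<phi>_def mp_prod)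
    also have "\<dots> = xm d" using IH[OF that] mp_xm by metis
    finally show ?thesis .
  qed
  have ofn: "of_nat d \<noteq> (0::int fract)" if "d > 0" for d
    using that by (simp add: of_nat_fract Zero_fract_def eq_fract)
  have divs: "\<phi> d dvd xm n" if "d \<in> S" for d
  proof -
    have "\<phi> d dvd (\<Prod>e | e dvd d. \<phi> e)" using S0[OF that] by (simp add: prod_divs_split)
    also have "\<dots> = xm d" using IHm[of d] that S0[OF that] by (auto simp: S_def)
    also have "(xm d :: int fract poly) dvd xm n" using that by (intro xm_dvd) (auto simp: S_def)
    finally show ?thesis .
  qed
  have cop1: "coprime (\<phi> d1) (\<phi> d2)" if d: "d1 \<in> S" "d2 \<in> S" "gcd d1 d2 < d1" for d1 d2
  proof (rule coprimeI)
    fix h assume h: "h dvd \<phi> d1" "h dvd \<phi> d2"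
    define g where "g = gcd d1 d2"
    have d1pos: "0 < d1" "d1 < n" using S0 d by (auto simp: S_def)
    have d2pos: "0 < d2" "d2 < n" using S0 d by (auto simp: S_def)
    have gpos: "0 < g" using d1pos by (simp add: g_def)
    have "\<phi> d1 dvd xm d1" using IHm[of d1] d1pos by (metis dvd_triv_left prod_divs_split)
    moreover have "\<phi> d2 dvd xm d2" using IHm[of d2] d2pos by (metis dvd_triv_left prod_divs_split)
    ultimately have "h dvd xm g" unfolding g_def using h by (meson dvd_trans xm_dvd_gcd)
    also have "xm g = (\<Prod>e | e dvd g. \<phi> e)" using IHm[of g] gpos d d1pos by (simp add: g_def)
    also have "\<dots> dvd (\<Prod>e | e dvd d1 \<and> e < d1. \<phi> e)"
    proof (rule prod_dvd_prod_subset[OF fin_divs])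
      show "{e. e dvd g} \<subseteq> {e. e dvd d1 \<and> e < d1}"
      proof
        fix e assume "e \<in> {e. e dvd g}"
        then have e: "e dvd g" by simp
        have "g dvd d1" by (simp add: g_def)
        moreover have "e \<le> g" using e gpos by (rule dvd_imp_le)
        ultimately show "e \<in> {e. e dvd d1 \<and> e < d1}" using e d(3) unfolding g_def
          by (auto intro: dvd_trans)
      qed
    qed
    finally have h2: "h dvd (\<Prod>e | e dvd d1 \<and> e < d1. \<phi> e)" .
    have "h * h dvd \<phi> d1 * (\<Prod>e | e dvd d1 \<and> e < d1. \<phi> e)" using h(1) h2 by (rule mult_dvd_mono)
    also have "\<dots> = xm d1" using IHm[of d1] d1pos by (simp add: prod_divs_split)
    finally show "is_unit h" using sqfree_xm ofn d1pos by blast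
  qed
  have cop: "coprime (\<phi> d1) (\<phi> d2)" if "d1 \<in> S" "d2 \<in> S" "d1 \<noteq> d2" for d1 d2
  proof (cases "gcd d1 d2 < d1")
    case True then show ?thesis using cop1 that by blast
  next
    case False
    have "gcd d1 d2 \<le> d1" "gcd d1 d2 \<le> d2" using S0 that by (auto intro: dvd_imp_le)
    then have "gcd d2 d1 < d2" using False that by (simp add: gcd.commute)
    then show ?thesis using cop1 that by (metis coprime_commute)
  qed
  define \<Psi> where "\<Psi> = (\<Prod>d\<in>S. cyclo d)"
  have "(\<Prod>d\<in>S. \<phi> d) dvd xm n" using finS divs cop by (intro prod_dvd_coprime) auto
  then have "fract_poly \<Psi> dvd fract_poly (xm n)"
    by (simp add: \<Psi>_def \<phi>_def mp_prod flip: mp_fract mp_xm[where 'a="int fract"])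
  moreover have lcP: "lead_coeff \<Psi> = 1" using IH S0 unfolding \<Psi>_def lead_coeff_prod by (intro prod.neutral) (auto simp: S_def)
  moreover have "content \<Psi> = 1"
  proof -
    have "content \<Psi> dvd 1" using content_dvd_coeff[of \<Psi> "degree \<Psi>"] lcP by simp
    then show ?thesis using is_unit_normalize normalize_content by metis
  qed
  ultimately have "\<Psi> dvd xm n" using fract_poly_dvdD by blast
  then obtain G where G: "xm n = \<Psi> * G" by blast
  have P0: "\<Psi> \<noteq> 0" using lcP by auto
  have "cyclo n = xm n div \<Psi>"
    using less.prems by (subst cyclo.simps) (simp add: xm_def \<Psi>_def S_def)
  also have "\<dots> = G" using G P0 by simp
  finally have cn: "cyclo n = G" .
  have 1: "(\<Prod>d | d dvd n. cyclo d) = xm n"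
    using less.prems by (simp add: prod_divs_split G cn \<Psi>_def S_def mult.commute)
  have "lead_coeff (cyclo n) = 1" using lead_xm[OF less.prems, where 'a=int] G cn lcP
    by (simp add: lead_coeff_mult)
  with 1 show ?case by blast
qed

lemma cyclo_prod_map:
  assumes "n > 0"
  shows "map_poly (of_int::int\<Rightarrow>'a::comm_ring_1) (cyclo n) *
           (\<Prod>d | d dvd n \<and> d < n. map_poly of_int (cyclo d)) = xm n"
proof -
  have "xm n = map_poly (of_int::int\<Rightarrow>'a) (\<Prod>d | d dvd n. cyclo d)"
    using cyclo_prod[OF assms] mp_xm by metis
  also have "\<dots> = map_poly of_int (cyclo n) * (\<Prod>d | d dvd n \<and> d < n. map_poly of_int (cyclo d))"
    using assms by (simp add: prod_divs_split mp_mult mp_prod)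
  finally show ?thesis by simp
qed

lemma cyclo_dvd_xm:
  assumes "n > 0"
  shows "map_poly (of_int::int\<Rightarrow>'a::comm_ring_1) (cyclo n) dvd xm n"
  using cyclo_prod_map[OF assms, where 'a='a] by (metis dvd_triv_left)

lemma cyclo_coprime:
  fixes m n :: nat
  assumes n: "n > 0" "of_nat n \<noteq> (0::'a::field)" and m: "0 < m" "\<not> n dvd m"
  shows "coprime (map_poly (of_int::int\<Rightarrow>'a) (cyclo n)) (xm m)"
proof (rule coprimeI)
  fix h :: "'a poly"
  assume h: "h dvd map_poly of_int (cyclo n)" "h dvd xm m"
  define g where "g = gcd m n"
  have gpos: "0 < g" using m by (simp add: g_def)
  have gn: "g dvd n" by (simp add: g_def)
  have "g \<noteq> n" using m by (metis g_def gcd_dvd1)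
  then have gl: "g < n" using gn n by (simp add: dvd_imp_le le_neq_implies_less)
  have "h dvd xm n" using h(1) cyclo_dvd_xm[OF n(1), where 'a='a] by (rule dvd_trans)
  then have "h dvd xm g" using h(2) unfolding g_def by (rule xm_dvd_gcd[rotated])
  also have "xm g = (\<Prod>d | d dvd g. map_poly (of_int::int\<Rightarrow>'a) (cyclo d))"
    using cyclo_prod[OF gpos] mp_xm mp_prod by metis
  also have "\<dots> dvd (\<Prod>d | d dvd n \<and> d < n. map_poly (of_int::int\<Rightarrow>'a) (cyclo d))"
  proof (rule prod_dvd_prod_subset[OF fin_divs])
    show "{e. e dvd g} \<subseteq> {e. e dvd n \<and> e < n}"
    proof
      fix e assume "e \<in> {e. e dvd g}"
      then have e: "e dvd g" by simp
      have "e \<le> g" using e gpos by (rule dvd_imp_le)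
      then show "e \<in> {e. e dvd n \<and> e < n}" using e gn gl by (auto intro: dvd_trans)
    qed
  qed
  finally have h2: "h dvd (\<Prod>d | d dvd n \<and> d < n. map_poly (of_int::int\<Rightarrow>'a) (cyclo d))" .
  have "h * h dvd map_poly of_int (cyclo n) * (\<Prod>d | d dvd n \<and> d < n. map_poly (of_int::int\<Rightarrow>'a) (cyclo d))"
    using h(1) h2 by (rule mult_dvd_mono)
  also have "\<dots> = xm n" by (rule cyclo_prod_map[OF n(1)])
  finally show "is_unit h" using sqfree_xm n(2) by blast
qed



definition bez :: "'a::field poly \<Rightarrow> 'a poly \<Rightarrow> bool" where
  "bez E P \<longleftrightarrow> (\<exists>u v. u*E + v*P = 1)"

definition good :: "'a::field poly \<Rightarrow> 'a poly fract \<Rightarrow> bool" where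
  "good P x \<longleftrightarrow> (\<exists>N E. E \<noteq> 0 \<and> bez E P \<and> x = to_fract N / to_fract E)"

definition zr :: "'a::field poly \<Rightarrow> 'a poly fract \<Rightarrow> bool" where
  "zr P x \<longleftrightarrow> (\<exists>N E. E \<noteq> 0 \<and> bez E P \<and> P dvd N \<and> x = to_fract N / to_fract E)"

definition unitp :: "'a::field poly \<Rightarrow> 'a poly fract \<Rightarrow> bool" where
  "unitp P x \<longleftrightarrow> x \<noteq> 0 \<and> good P x \<and> good P (inverse x)"

lemma tf_add: "(E::'a::idom) \<noteq> 0 \<Longrightarrow> E' \<noteq> 0 \<Longrightarrow> to_fract N / to_fract E + to_fract N' / to_fract E' = to_fract (N*E' + N'*E) / to_fract (E*E')"
  by (simp add: add_frac_eq)

lemma tf_mult: "to_fract N / to_fract E * (to_fract N' / to_fract E') = to_fract (N*N') / (to_fract (E*E') :: 'a::idom fract)"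
  by simp

lemma bez_mult: "bez a P \<Longrightarrow> bez b P \<Longrightarrow> bez (a*b) P"
proof -
  assume "bez a P" "bez b P"
  then obtain u1 v1 u2 v2 where 1: "u1*a + v1*P = 1" and 2: "u2*b + v2*P = 1"
    unfolding bez_def by blast
  have "(u1*a + v1*P) * (u2*b + v2*P) = 1" using 1 2 by simp
  then have "(u1*u2) * (a*b) + (u1*a*v2 + v1*u2*b + v1*v2*P) * P = 1" by (simp add: algebra_simps)
  then show ?thesis unfolding bez_def by blast
qed

lemma bez_1: "bez 1 P" unfolding bez_def by (intro exI[of _ 1] exI[of _ 0]) simp

lemma bez_const: "c \<noteq> 0 \<Longrightarrow> bez [:c:] P"
  unfolding bez_def by (intro exI[of _ "[:inverse c:]"] exI[of _ 0]) simp

lemma bez_prod: "(\<And>i. i \<in> S \<Longrightarrow> bez (f i) P) \<Longrightarrow> bez (\<Prod>i\<in>S. f i) P"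
  by (induction S rule: infinite_finite_induct) (auto simp: bez_1 bez_mult)

lemma bez_coprime: "bez E P \<Longrightarrow> coprime E P"
  unfolding bez_def using bezout_coprime by blast


lemma good_to_fract [simp]: "good P (to_fract a)"
  unfolding good_def by (intro exI[of _ a] exI[of _ 1]) (simp add: bez_1)

lemma good_0 [simp]: "good P 0" using good_to_fract[of P 0] by simp
lemma good_1 [simp]: "good P 1" using good_to_fract[of P 1] by simp

lemma good_add: "good P x \<Longrightarrow> good P y \<Longrightarrow> good P (x + y)"
proof -
  assume "good P x" "good P y"
  then obtain N E N' E' where x: "E \<noteq> 0" "bez E P" "x = to_fract N / to_fract E"
    and y: "E' \<noteq> 0" "bez E' P" "y = to_fract N' / to_fract E'" unfolding good_def by blast
  have "x + y = to_fract (N*E' + N'*E) / to_fract (E*E')" using x y by (simp add: tf_add)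
  then show ?thesis unfolding good_def using x y bez_mult
    by (intro exI[of _ "N*E' + N'*E"] exI[of _ "E*E'"]) simp
qed

lemma good_mult: "good P x \<Longrightarrow> good P y \<Longrightarrow> good P (x * y)"
proof -
  assume "good P x" "good P y"
  then obtain N E N' E' where x: "E \<noteq> 0" "bez E P" "x = to_fract N / to_fract E"
    and y: "E' \<noteq> 0" "bez E' P" "y = to_fract N' / to_fract E'" unfolding good_def by blast
  have "x * y = to_fract (N*N') / to_fract (E*E')" using x y by (simp only: tf_mult)
  then show ?thesis unfolding good_def using x y bez_mult
    by (intro exI[of _ "N*N'"] exI[of _ "E*E'"]) simp
qed

lemma good_uminus: "good P x \<Longrightarrow> good P (- x)"
proof -
  assume "good P x"
  then obtain N E where x: "E \<noteq> 0" "bez E P" "x = to_fract N / to_fract E" unfolding good_def by blast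
  have "- x = to_fract (- N) / to_fract E" using x by simp
  then show ?thesis unfolding good_def using x by blast
qed

lemma good_diff: "good P x \<Longrightarrow> good P y \<Longrightarrow> good P (x - y)"
  using good_add[of P x "- y"] good_uminus[of P y] by simp

lemma good_sum: "(\<And>i. i \<in> S \<Longrightarrow> good P (f i)) \<Longrightarrow> good P (\<Sum>i\<in>S. f i)"
  by (induction S rule: infinite_finite_induct) (auto intro: good_add)

lemma good_prod: "(\<And>i. i \<in> S \<Longrightarrow> good P (f i)) \<Longrightarrow> good P (\<Prod>i\<in>S. f i)"
  by (induction S rule: infinite_finite_induct) (auto intro: good_mult)

lemma good_power: "good P x \<Longrightarrow> good P (x ^ k)"
  by (induction k) (auto intro: good_mult)

lemma zr_good: "zr P x \<Longrightarrow> good P x"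
  unfolding zr_def good_def by blast

lemma zr_0 [simp]: "zr P 0"
  unfolding zr_def by (intro exI[of _ 0] exI[of _ 1]) (simp add: bez_1)

lemma zr_to_fract: "P dvd N \<Longrightarrow> zr P (to_fract N)"
  unfolding zr_def by (intro exI[of _ N] exI[of _ 1]) (simp add: bez_1)

lemma zr_add: "zr P x \<Longrightarrow> zr P y \<Longrightarrow> zr P (x + y)"
proof -
  assume "zr P x" "zr P y"
  then obtain N E N' E' where x: "E \<noteq> 0" "bez E P" "P dvd N" "x = to_fract N / to_fract E"
    and y: "E' \<noteq> 0" "bez E' P" "P dvd N'" "y = to_fract N' / to_fract E'" unfolding zr_def by blast
  have "x + y = to_fract (N*E' + N'*E) / to_fract (E*E')" using x y by (simp add: tf_add)
  moreover have "P dvd N*E' + N'*E" using x y by simp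
  ultimately show ?thesis unfolding zr_def using x y bez_mult
    by (intro exI[of _ "N*E' + N'*E"] exI[of _ "E*E'"]) simp
qed

lemma zr_mult: "zr P x \<Longrightarrow> good P y \<Longrightarrow> zr P (x * y)"
proof -
  assume "zr P x" "good P y"
  then obtain N E N' E' where x: "E \<noteq> 0" "bez E P" "P dvd N" "x = to_fract N / to_fract E"
    and y: "E' \<noteq> 0" "bez E' P" "y = to_fract N' / to_fract E'" unfolding zr_def good_def by blast
  have "x * y = to_fract (N*N') / to_fract (E*E')" using x y by (simp only: tf_mult)
  moreover have "P dvd N*N'" using x by simp
  ultimately show ?thesis unfolding zr_def using x y bez_mult
    by (intro exI[of _ "N*N'"] exI[of _ "E*E'"]) simp
qed

lemma zr_mult2: "good P y \<Longrightarrow> zr P x \<Longrightarrow> zr P (y * x)"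
  using zr_mult[of P x y] by (simp add: mult.commute)

lemma zr_uminus: "zr P x \<Longrightarrow> zr P (- x)"
  using zr_mult[of P x "-1"] good_uminus[of P 1] by simp

lemma zr_diff: "zr P x \<Longrightarrow> zr P y \<Longrightarrow> zr P (x - y)"
  using zr_add[of P x "- y"] zr_uminus[of P y] by simp

lemma zr_sum: "(\<And>i. i \<in> S \<Longrightarrow> zr P (f i)) \<Longrightarrow> zr P (\<Sum>i\<in>S. f i)"
  by (induction S rule: infinite_finite_induct) (auto intro: zr_add)

lemma unitpI:
  assumes "N \<noteq> 0" "E \<noteq> 0" "bez N P" "bez E P"
  shows "unitp P (to_fract N / to_fract E)"
proof -
  have g1: "good P (to_fract N / to_fract E)" unfolding good_def using assms by blast
  have "good P (to_fract E / to_fract N)" unfolding good_def using assms by blast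
  then have g2: "good P (inverse (to_fract N / to_fract E))" by simp
  show ?thesis unfolding unitp_def using g1 g2 assms by simp
qed

lemma unitp_good: "unitp P x \<Longrightarrow> good P x" by (simp add: unitp_def)
lemma unitp_good_inv: "unitp P x \<Longrightarrow> good P (inverse x)" by (simp add: unitp_def)
lemma unitp_nz: "unitp P x \<Longrightarrow> x \<noteq> 0" by (simp add: unitp_def)

lemma unitp_1 [simp]: "unitp P 1" by (simp add: unitp_def)

lemma unitp_mult: "unitp P x \<Longrightarrow> unitp P y \<Longrightarrow> unitp P (x * y)"
  unfolding unitp_def by (auto intro: good_mult)

lemma unitp_inverse: "unitp P x \<Longrightarrow> unitp P (inverse x)"
  unfolding unitp_def by auto

lemma unitp_divide: "unitp P x \<Longrightarrow> unitp P y \<Longrightarrow> unitp P (x / y)"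
  by (simp add: divide_inverse unitp_mult unitp_inverse)

lemma good_divide: "good P x \<Longrightarrow> unitp P y \<Longrightarrow> good P (x / y)"
  by (simp add: divide_inverse good_mult unitp_def)

lemma unitp_uminus: "unitp P x \<Longrightarrow> unitp P (- x)"
  unfolding unitp_def by (auto intro: good_uminus simp: inverse_minus_eq)

lemma unitp_power: "unitp P x \<Longrightarrow> unitp P (x ^ k)"
  by (induction k) (auto intro: unitp_mult)

lemma unitp_prod: "(\<And>i. i \<in> S \<Longrightarrow> unitp P (f i)) \<Longrightarrow> unitp P (\<Prod>i\<in>S. f i)"
  by (induction S rule: infinite_finite_induct) (auto intro: unitp_mult)

lemma unitp_power_int: "unitp P x \<Longrightarrow> unitp P (x powi k)"
  by (cases "k \<ge> 0") (auto simp: power_int_def intro: unitp_power unitp_inverse)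

abbreviation cg :: "'a::field poly \<Rightarrow> 'a poly fract \<Rightarrow> 'a poly fract \<Rightarrow> bool" where
  "cg P x y \<equiv> zr P (x - y)"

lemma cg_refl: "cg P x x" by simp
lemma cg_eq: "x = y \<Longrightarrow> cg P x y" by simp

lemma cg_sym: "cg P x y \<Longrightarrow> cg P y x"
  using zr_uminus[of P "x - y"] by simp

lemma cg_trans: "cg P x y \<Longrightarrow> cg P y z \<Longrightarrow> cg P x z"
  using zr_add[of P "x - y" "y - z"] by simp

lemma cg_add: "cg P x x' \<Longrightarrow> cg P y y' \<Longrightarrow> cg P (x + y) (x' + y')"
  using zr_add[of P "x - x'" "y - y'"] by (simp add: algebra_simps)

lemma cg_uminus: "cg P x x' \<Longrightarrow> cg P (- x) (- x')"
  using zr_uminus[of P "x - x'"] by (simp add: algebra_simps)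

lemma cg_sum: "(\<And>i. i \<in> S \<Longrightarrow> cg P (f i) (g i)) \<Longrightarrow> cg P (\<Sum>i\<in>S. f i) (\<Sum>i\<in>S. g i)"
  by (induction S rule: infinite_finite_induct) (auto intro: cg_add)

lemma cg_mult: "cg P x x' \<Longrightarrow> cg P y y' \<Longrightarrow> good P x \<Longrightarrow> good P y' \<Longrightarrow> cg P (x * y) (x' * y')"
proof -
  assume a: "cg P x x'" "cg P y y'" "good P x" "good P y'"
  have "zr P (x * (y - y') + (x - x') * y')"
    using a by (intro zr_add zr_mult zr_mult2)
  then show ?thesis by (simp add: algebra_simps)
qed

lemma cg_good: "cg P x y \<Longrightarrow> good P y \<Longrightarrow> good P x"
  using good_add[of P "x - y" y] zr_good by fastforce

lemma cg_prod:
  "(\<And>i. i \<in> S \<Longrightarrow> cg P (f i) (g i)) \<Longrightarrow> (\<And>i. i \<in> S \<Longrightarrow> good P (g i)) \<Longrightarrow>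
    cg P (\<Prod>i\<in>S. f i) (\<Prod>i\<in>S. g i)"
proof (induction S rule: infinite_finite_induct)
  case (insert x F)
  have "good P (f x)" using insert.prems cg_good by blast
  moreover have "good P (\<Prod>i\<in>F. g i)" using insert.prems by (intro good_prod) auto
  ultimately show ?case using insert by (simp add: cg_mult)
qed auto

lemma cg_power: "cg P x y \<Longrightarrow> good P y \<Longrightarrow> cg P (x ^ k) (y ^ k)"
  using cg_prod[of "{..<k}" P "\<lambda>_. x" "\<lambda>_. y"] by simp

lemma cg_inverse: "unitp P x \<Longrightarrow> unitp P y \<Longrightarrow> cg P x y \<Longrightarrow> cg P (inverse x) (inverse y)"
proof -
  assume a: "unitp P x" "unitp P y" "cg P x y"
  have "zr P ((x - y) * (- (inverse x * inverse y)))"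
    using a by (intro zr_mult good_uminus good_mult unitp_good_inv)
  moreover have "(x - y) * (- (inverse x * inverse y)) = inverse x - inverse y"
  proof -
    have "x \<noteq> 0" "y \<noteq> 0" using a(1,2) unitp_nz by auto
    then show ?thesis by (simp add: algebra_simps)
  qed
  ultimately show ?thesis by simp
qed

lemma zr_cong_rf: "zr P x \<Longrightarrow> cong_rf x 0 P"
  unfolding zr_def cong_rf_def
  by (auto simp: Fract_conv_to_fract intro: bez_coprime)



lemma to_fract_power: "to_fract (x ^ m) = to_fract x ^ m"
  by (induction m) simp_all

definition K' :: "coeffK \<Rightarrow> ratfun" where "K' c = to_fract [:c:]"

lemma K'_mult: "K' (a * b) = K' a * K' b"
  unfolding K'_def mult_to_poly[symmetric] by (rule to_fract_mult)
lemma K'_1 [simp]: "K' 1 = 1" by (simp add: K'_def pCons_one)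
lemma K'_0_iff [simp]: "K' a = 0 \<longleftrightarrow> a = 0" by (simp add: K'_def)
lemma K'_inverse: "K' (inverse a) = inverse (K' a)"
proof (cases "a = 0")
  case False
  have "K' (inverse a) * K' a = 1" using False by (simp flip: K'_mult)
  then show ?thesis using False by (simp add: field_simps)
qed (simp add: K'_def)

lemma ofnat_K: "n > 0 \<Longrightarrow> (of_nat n :: coeffK) \<noteq> 0"
  by (simp add: of_nat_fract Zero_fract_def eq_fract)

lemma ind_a_pow: "n > 0 \<Longrightarrow> ind_a ^ n \<noteq> 1"
proof
  assume a: "n > 0" "ind_a ^ n = 1"
  have "ind_a ^ n = to_fract ([:0,1:]^n)" by (simp add: ind_a_def to_fract_power)
  with a have "[:0,1:]^n = (1 :: rat poly poly poly poly)" by (metis to_fract_1 to_fract_eq_iff)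
  then have "monom (1::rat poly poly poly) n = 1" by (simp add: monom_altdef)
  with a show False by (simp add: monom_eq_1_iff)
qed

lemma ind_b_pow: "n > 0 \<Longrightarrow> ind_b ^ n \<noteq> 1"
proof
  assume a: "n > 0" "ind_b ^ n = 1"
  have "ind_b ^ n = to_fract ([:[:0,1:]^n:])" by (simp add: ind_b_def poly_const_pow flip: to_fract_power)
  with a have "[:[:0,1:]^n:] = (1 :: rat poly poly poly poly)" by (metis to_fract_1 to_fract_eq_iff)
  then have "monom (1::rat poly poly) n = 1" by (simp add: monom_altdef pCons_one[symmetric])
  with a show False by (simp add: monom_eq_1_iff)
qed

lemma ind_c_pow: "n > 0 \<Longrightarrow> ind_c ^ n \<noteq> 1"
proof
  assume a: "n > 0" "ind_c ^ n = 1"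
  have "ind_c ^ n = to_fract ([:[:[:0,1:]^n:]:])" by (simp add: ind_c_def poly_const_pow flip: to_fract_power)
  with a have "[:[:[:0,1:]^n:]:] = (1 :: rat poly poly poly poly)" by (metis to_fract_1 to_fract_eq_iff)
  then have "monom (1::rat poly) n = 1" by (simp add: monom_altdef pCons_one[symmetric])
  with a show False by (simp add: monom_eq_1_iff)
qed

lemma ind_d_pow: "n > 0 \<Longrightarrow> ind_d ^ n \<noteq> 1"
proof
  assume a: "n > 0" "ind_d ^ n = 1"
  have "ind_d ^ n = to_fract ([:[:[:[:0,1:]^n:]:]:])" by (simp add: ind_d_def poly_const_pow flip: to_fract_power)
  with a have "[:[:[:[:0,1:]^n:]:]:] = (1 :: rat poly poly poly poly)" by (metis to_fract_1 to_fract_eq_iff)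
  then have "monom (1::rat) n = 1" by (simp add: monom_altdef pCons_one[symmetric])
  with a show False by (simp add: monom_eq_1_iff)
qed

lemma ind_nz: "ind_a \<noteq> 0" "ind_b \<noteq> 0" "ind_c \<noteq> 0" "ind_d \<noteq> 0"
  by (simp_all add: ind_a_def ind_b_def ind_c_def ind_d_def)

lemma ABCD: "A = K' ind_a" "B = K' ind_b" "C = K' ind_c" "D = K' ind_d"
  by (simp_all add: A_def B_def C_def D_def K'_def)

lemma Q_nz: "Q \<noteq> 0" by (simp add: Q_def)

lemma Q_pow: "Q ^ m = to_fract (monom 1 m)"
  by (simp add: Q_def monom_altdef to_fract_power)

lemma K'_Q_pow: "K' c * Q ^ m = to_fract (monom c m)"
proof -
  have "K' c * Q ^ m = to_fract [:c:] * to_fract ([:0,1:]^m)" by (simp add: K'_def Q_def to_fract_power)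
  also have "\<dots> = to_fract ([:c:] * [:0,1:]^m)" by (rule to_fract_mult[symmetric])
  also have "\<dots> = to_fract (monom c m)" by (simp add: monom_altdef)
  finally show ?thesis .
qed



context
  fixes n :: nat
  assumes n1: "n > 1"
begin

abbreviation PP :: "coeffK poly" where "PP \<equiv> map_poly of_int (cyclo n)"

lemma n0: "n > 0" using n1 by simp

lemma PP_dvd: "PP dvd xm n" using cyclo_dvd_xm[OF n0] .

lemma bez_X: "bez [:0,1:] PP"
proof -
  obtain w where w: "xm n = PP * w" using PP_dvd by blast
  have "monom 1 (n-1) * [:0,1:] = (monom 1 n :: coeffK poly)"
    using n0 by (simp add: monom_Suc[symmetric] mult_monom flip: monom_altdef)
  then have "monom 1 (n-1) * [:0,1:] + (- w) * PP = (1::coeffK poly)"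
    using w by (simp add: xm_def algebra_simps)
  then show ?thesis unfolding bez_def by blast
qed

lemma unitp_const: "c \<noteq> 0 \<Longrightarrow> unitp PP (K' c)"
  using unitpI[of "[:c:]" 1 PP] by (simp add: K'_def bez_const bez_1)

lemma unitp_Q: "unitp PP Q"
  using unitpI[of "[:0,1:]" 1 PP] by (simp add: Q_def bez_X bez_1)

lemma unitp_Qpi: "unitp PP (Q powi e)" by (rule unitp_power_int[OF unitp_Q])
lemma good_Qpi: "good PP (Q powi e)" by (rule unitp_good[OF unitp_Qpi])

lemma cg_Qn: "cg PP (Q^n) 1"
proof -
  have "Q^n - 1 = to_fract (xm n)" by (simp add: Q_pow xm_def)
  then show ?thesis using zr_to_fract[OF PP_dvd] by simp
qed

lemma cg_Qn_pi: "cg PP ((Q^n) powi t) 1"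
proof (cases "t \<ge> 0")
  case True
  have "cg PP ((Q^n)^nat t) (1^nat t)" by (rule cg_power[OF cg_Qn]) simp
  then show ?thesis using True by (simp add: power_int_def)
next
  case False
  have "cg PP (inverse ((Q^n)^nat (-t))) (inverse (1^nat (-t)))"
    by (intro cg_inverse unitp_power unitp_Q cg_power[OF cg_Qn]) simp_all
  then show ?thesis using False by (simp add: power_int_def power_inverse)
qed

lemma cg_Qpi: "int n dvd (a - b) \<Longrightarrow> cg PP (Q powi a) (Q powi b)"
proof -
  assume "int n dvd (a - b)"
  then obtain t where t: "a = b + int n * t" by (metis dvd_def add_diff_cancel_left' diff_add_cancel add.commute)
  have "Q powi a = Q powi b * (Q^n) powi t"
    using Q_nz by (simp add: t power_int_add power_int_mult)
  moreover have "cg PP (Q powi b * (Q^n) powi t) (Q powi b * 1)"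
    by (intro cg_mult cg_Qn_pi good_Qpi) simp_all
  ultimately show ?thesis by simp
qed

lemma unit_lin_pos:
  assumes c: "c ^ n \<noteq> 1"
  shows "unitp PP (1 - K' c * Q ^ m)"
proof -
  define y where "y = (monom c m :: coeffK poly)"
  obtain s where s: "y^n - 1 = (y - 1) * s" using one_dvd_pow[of y n] by blast
  obtain t where t: "xm (m*n) = xm n * (t::coeffK poly)" using xm_dvd[of n "m*n"] by (auto elim: dvdE)
  obtain w where w: "xm n = PP * w" using PP_dvd by blast
  have y1: "y^n = smult (c^n) (monom 1 (m*n))" by (simp add: y_def monom_power smult_monom)
  have y2: "monom (1::coeffK) (m*n) = xm n * t + 1" using t by (simp add: xm_def algebra_simps)
  have yn: "y^n = smult (c^n) (PP * w * t) + [:c^n:]" using w y1 y2 by (simp add: smult_add_right)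
  have "[:c^n - 1:] = [:c^n:] - (1::coeffK poly)" by (simp add: pCons_one[symmetric])
  also have "\<dots> = (y - 1) * s - smult (c^n) (PP * w * t)" using yn s by (simp add: algebra_simps)
  finally have e: "[:c^n - 1:] = (y - 1) * s - smult (c^n) (PP * w * t)" .
  define iv where "iv = [:inverse (c^n - 1):]"
  have "iv * [:c^n - 1:] = 1" using c by (simp add: iv_def mult_to_poly pCons_one)
  then have "(- (iv * s)) * (1 - y) + (- (iv * smult (c^n) (w * t))) * PP = 1"
    unfolding e by (simp add: algebra_simps)
  then have b: "bez (1 - y) PP" unfolding bez_def by blast
  have nz: "1 - y \<noteq> 0"
  proof
    assume "1 - y = 0"
    then have "monom c m = 1" by (simp add: y_def)
    then show False using c by (simp add: monom_eq_1_iff)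
  qed
  have "1 - K' c * Q ^ m = to_fract (1 - y) / to_fract 1" by (simp add: y_def K'_Q_pow)
  then show ?thesis using unitpI[OF nz _ b bez_1] by simp
qed

lemma unit_one_pos:
  assumes m: "0 < m" "\<not> n dvd m"
  shows "unitp PP (1 - Q ^ m)"
proof -
  have "coprime PP (xm m)" using cyclo_coprime[OF n0 ofnat_K[OF n0] m] .
  then obtain u v where "u * PP + v * xm m = 1" using coprime_bezout by blast
  then have "(- v) * (- xm m) + u * PP = 1" by (simp add: algebra_simps)
  then have b: "bez (- xm m) PP" unfolding bez_def by blast
  have nz: "- xm m \<noteq> (0::coeffK poly)" using lead_xm[OF m(1), where 'a=coeffK] by auto
  have "1 - Q ^ m = to_fract (- xm m) / to_fract 1" by (simp add: Q_pow xm_def)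
  then show ?thesis using unitpI[OF nz _ b bez_1] by simp
qed

lemma unit_lin:
  assumes c: "c \<noteq> 0" and h: "c ^ n \<noteq> 1 \<or> (c = 1 \<and> \<not> int n dvd e)"
  shows "unitp PP (1 - K' c * Q powi e)"
proof (cases "e \<ge> 0")
  case True
  then obtain m where m: "e = int m" by (metis nonneg_eq_int)
  show ?thesis
  proof (cases "c ^ n \<noteq> 1")
    case True then show ?thesis using unit_lin_pos m by simp
  next
    case False
    then have "c = 1" "\<not> n dvd m" using h m by auto
    moreover have "m > 0" using \<open>\<not> n dvd m\<close> by (cases m) auto
    ultimately show ?thesis using unit_one_pos m by simp
  qed
next
  case False
  then obtain m where m: "e = - int m" "m > 0" by (metis neg_int_cases not_le)
  have "unitp PP (1 - K' (inverse c) * Q ^ m)"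
  proof (cases "c ^ n \<noteq> 1")
    case True then show ?thesis using unit_lin_pos[of "inverse c" m] by (simp add: power_inverse)
  next
    case False
    then have "c = 1" "\<not> n dvd m" using h m by auto
    then show ?thesis using unit_one_pos m by simp
  qed
  moreover have "1 - K' c * Q powi e = (- (K' c * inverse (Q ^ m))) * (1 - K' (inverse c) * Q ^ m)"
  proof -
    have "K' c \<noteq> 0" using c by simp
    then show ?thesis unfolding K'_inverse using Q_nz by (simp add: m power_int_minus field_simps)
  qed
  moreover have "unitp PP (- (K' c * inverse (Q ^ m)))"
    using c by (intro unitp_uminus unitp_mult unitp_const unitp_inverse unitp_power unitp_Q)
  ultimately show ?thesis by (metis unitp_mult)
qed

end



definition Xf :: "coeffK \<Rightarrow> nat \<Rightarrow> ratfun" where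
  "Xf c j = 1 - K' c * Q powi (2 * int j - 1)"
definition Yf :: "coeffK \<Rightarrow> nat \<Rightarrow> ratfun" where
  "Yf c j = 1 - K' (inverse c) * Q powi (2 * int j + 2)"

definition R :: "coeffK \<Rightarrow> nat \<Rightarrow> ratfun" where
  "R c k = qpoch (K' c / Q) (Q^2) k / qpoch (Q^2 / K' c) (Q^2) k"

lemma powi_one: "x powi 1 = (x::'a::division_ring)"
  using power_int_of_nat[of x 1] by simp

lemma xfac: "K' c / Q * (Q^2)^j = K' c * Q powi (2 * int j - 1)"
proof -
  have e: "2 * int j - 1 = int (2*j) - 1" by simp
  have "Q powi (int (2*j) - 1) = Q powi int (2*j) / Q powi 1"
    using Q_nz by (intro power_int_diff) simp
  also have "\<dots> = (Q^2)^j / Q" by (simp only: power_int_of_nat powi_one power_mult)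
  finally show ?thesis unfolding e by simp
qed

lemma yfac: "c \<noteq> 0 \<Longrightarrow> Q^2 / K' c * (Q^2)^j = K' (inverse c) * Q powi (2 * int j + 2)"
proof -
  have e: "2 * int j + 2 = int (2*j + 2)" by simp
  have "Q powi (int (2*j + 2)) = Q^2 * (Q^2)^j" by (simp only: power_int_of_nat) (simp add: power_mult power_add power2_eq_square)
  then show ?thesis unfolding e by (simp add: K'_inverse divide_inverse)
qed

lemma qpoch_X: "qpoch (K' c / Q) (Q^2) k = (\<Prod>j<k. Xf c j)"
  unfolding qpoch_def xfac Xf_def ..

lemma qpoch_Y: "c \<noteq> 0 \<Longrightarrow> qpoch (Q^2 / K' c) (Q^2) k = (\<Prod>j<k. Yf c j)"
proof -
  assume c: "c \<noteq> 0"
  show ?thesis unfolding qpoch_def yfac[OF c] Yf_def ..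
qed

lemma R_eq: "c \<noteq> 0 \<Longrightarrow> R c k = (\<Prod>j<k. Xf c j) / (\<Prod>j<k. Yf c j)"
  by (simp add: R_def qpoch_X qpoch_Y)

lemma cg_lin: "cg P x y \<Longrightarrow> good P a \<Longrightarrow> cg P (1 - a*x) (1 - a*y)"
  using zr_mult2[of P "- a" "x - y"] good_uminus[of P a] by (simp add: algebra_simps)

definition adm :: "nat \<Rightarrow> coeffK \<Rightarrow> bool" where
  "adm n c \<longleftrightarrow> c \<noteq> 0 \<and> (c ^ n \<noteq> 1 \<or> c = 1)"

context
  fixes n :: nat
  assumes n1: "n > 1" and odd: "odd n"
begin

lemma good_Xf: "good (PP n) (Xf c j)"
  unfolding Xf_def K'_def
  by (intro good_diff good_mult good_to_fract good_1 good_Qpi n1)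

lemma unit_Yf:
  assumes c: "adm n c" and j: "j + 1 < n"
  shows "unitp (PP n) (Yf c j)"
  unfolding Yf_def
proof (rule unit_lin[OF n1])
  show "inverse c \<noteq> 0" using c by (simp add: adm_def)
  show "inverse c ^ n \<noteq> 1 \<or> inverse c = 1 \<and> \<not> int n dvd 2 * int j + 2"
  proof (cases "c = 1")
    case True
    have "\<not> n dvd 2 * (j + 1)"
    proof
      assume "n dvd 2 * (j + 1)"
      moreover have "coprime n 2" using odd by (simp add: coprime_commute)
      ultimately have "n dvd j + 1" using coprime_dvd_mult_right_iff by blast
      then show False using j by (auto dest: dvd_imp_le)
    qed
    then have "\<not> int n dvd 2 * int j + 2"
      by (metis (mono_tags, opaque_lifting) int_dvd_int_iff of_nat_add of_nat_mult of_nat_numeral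
          of_nat_1 distrib_left mult.right_neutral)
    then show ?thesis using True by simp
  next
    case False
    then show ?thesis using c by (simp add: adm_def power_inverse)
  qed
qed

lemma unit_den: "adm n c \<Longrightarrow> k < n \<Longrightarrow> unitp (PP n) (\<Prod>j<k. Yf c j)"
  by (intro unitp_prod unit_Yf) auto

lemma good_R: "adm n c \<Longrightarrow> k < n \<Longrightarrow> good (PP n) (R c k)"
  by (simp add: adm_def R_eq good_divide good_prod good_Xf unit_den)

end



context
  fixes n :: nat
  assumes n1: "n > 1" and odd: "odd n"
begin

abbreviation NN :: nat where "NN \<equiv> (n + 1) div 2"

lemma NN2: "2 * NN = n + 1" using odd by simp

lemma NN_lt: "NN < n" using n1 odd NN2 by linarith

lemma PR:
  assumes c: "adm n c" and k: "k \<le> NN - k"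
  shows "cg (PP n) (R c (NN - k)) (R c k * (\<Prod>j\<in>{k..<NN-k}. - K' c * Q powi (-2 - 2*int j)))"
proof -
  have c0: "c \<noteq> 0" using c by (simp add: adm_def)
  define I where "I = {k..<NN-k}"
  have numsplit: "(\<Prod>j<NN-k. Xf c j) = (\<Prod>j<k. Xf c j) * (\<Prod>j\<in>I. Xf c j)"
    unfolding I_def lessThan_atLeast0 by (rule prod.atLeastLessThan_concat[symmetric]) (use k in auto)
  have densplit: "(\<Prod>j<NN-k. Yf c j) = (\<Prod>j<k. Yf c j) * (\<Prod>j\<in>I. Yf c j)"
    unfolding I_def lessThan_atLeast0 by (rule prod.atLeastLessThan_concat[symmetric]) (use k in auto)
  have reidx: "(\<Prod>j\<in>I. Xf c j) = (\<Prod>j\<in>I. Xf c (NN - 1 - j))"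
    by (rule prod.reindex_bij_witness[of I "\<lambda>j. NN-1-j" "\<lambda>j. NN-1-j"]) (auto simp: I_def)
  have goodK: "good (PP n) (K' c)" by (simp add: K'_def)
  have fac: "cg (PP n) (Xf c (NN-1-j)) ((- K' c * Q powi (-2 - 2*int j)) * Yf c j)" if "j \<in> I" for j
  proof -
    have j: "j < NN" using that by (auto simp: I_def)
    have i1: "int (NN - 1 - j) = int NN - 1 - int j" using j by simp
    have i2: "2 * int NN = int n + 1" using NN2 by linarith
    have gen: "\<And>x. 2 * x = int n + 1 \<Longrightarrow> 2 * (x - 1 - int j) - 1 - (-2 - 2*int j) = int n"
      by presburger
    have "2 * int (NN-1-j) - 1 - (-2 - 2*int j) = int n" unfolding i1 using gen[OF i2] .
    then have "int n dvd (2 * int (NN-1-j) - 1) - (-2 - 2*int j)" by (metis dvd_refl)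
    then have "cg (PP n) (Q powi (2 * int (NN-1-j) - 1)) (Q powi (-2 - 2*int j))" by (rule cg_Qpi[OF n1])
    then have "cg (PP n) (Xf c (NN-1-j)) (1 - K' c * Q powi (-2 - 2*int j))"
      unfolding Xf_def using goodK by (rule cg_lin)
    moreover have "1 - K' c * Q powi (-2 - 2*int j) = (- K' c * Q powi (-2 - 2*int j)) * Yf c j"
    proof -
      have e1: "K' c * inverse (K' c) = 1" using c0 by simp
      have e2: "Q powi (-2 - 2*int j) * Q powi (2 * int j + 2) = 1"
        using Q_nz by (subst power_int_add[symmetric]) auto
      have "(- K' c * Q powi (-2 - 2*int j)) * Yf c j = - K' c * Q powi (-2 - 2*int j) +
          (K' c * inverse (K' c)) * (Q powi (-2 - 2*int j) * Q powi (2 * int j + 2))"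
        unfolding Yf_def K'_inverse by (simp add: algebra_simps)
      also have "\<dots> = 1 - K' c * Q powi (-2 - 2*int j)" unfolding e1 e2 by simp
      finally show ?thesis by simp
    qed
    ultimately show ?thesis by simp
  qed
  have unitY: "unitp (PP n) (Yf c j)" if "j \<in> I" for j
    using that NN_lt by (intro unit_Yf[OF n1 odd c]) (auto simp: I_def)
  have goodW: "good (PP n) (- K' c * Q powi (-2 - 2*int j))" for j
    using goodK by (intro good_mult good_uminus good_Qpi n1)
  have cgI: "cg (PP n) (\<Prod>j\<in>I. Xf c (NN-1-j)) (\<Prod>j\<in>I. (- K' c * Q powi (-2 - 2*int j)) * Yf c j)"
  proof (rule cg_prod)
    fix j assume "j \<in> I"
    then show "cg (PP n) (Xf c (NN-1-j)) ((- K' c * Q powi (-2 - 2*int j)) * Yf c j)" by (rule fac)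
    show "good (PP n) ((- K' c * Q powi (-2 - 2*int j)) * Yf c j)"
      using goodW unitp_good[OF unitY[OF \<open>j \<in> I\<close>]] by (rule good_mult)
  qed
  define W where "W = (\<Prod>j\<in>I. - K' c * Q powi (-2 - 2*int j))"
  define YI where "YI = (\<Prod>j\<in>I. Yf c j)"
  have uYI: "unitp (PP n) YI" unfolding YI_def using unitY by (intro unitp_prod) auto
  have cgX: "cg (PP n) (\<Prod>j\<in>I. Xf c j) (W * YI)"
    using cgI unfolding reidx W_def YI_def prod.distrib .
  have Reqn: "R c (NN - k) = (\<Prod>j\<in>I. Xf c j) * (R c k / YI)"
    unfolding R_eq[OF c0] numsplit densplit YI_def by (simp add: divide_inverse inverse_mult_distrib mult_ac)
  have kn: "k < n" using k NN_lt by linarith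
  have "cg (PP n) ((\<Prod>j\<in>I. Xf c j) * (R c k / YI)) ((W * YI) * (R c k / YI))"
    using uYI good_R[OF n1 odd c kn]
    by (intro cg_mult[OF cgX cg_refl] good_divide good_prod good_Xf n1 odd)
  moreover have "(W * YI) * (R c k / YI) = R c k * W" using unitp_nz[OF uYI] by simp
  ultimately show ?thesis using Reqn by (simp add: W_def I_def)
qed

end



definition zz :: ratfun where "zz = B * Q^7 / (C * D)"

definition EE :: "nat \<Rightarrow> ratfun" where
  "EE k = R ind_a k * R (inverse ind_a) k * R (inverse ind_b) k * R ind_c k * R ind_d k * R 1 k"

definition TT :: "nat \<Rightarrow> ratfun" where
  "TT k = qint Q (4 * int k - 1) * EE k * zz ^ k"

lemma cg_mult6:
  assumes "cg P x1 y1" "cg P x2 y2" "cg P x3 y3" "cg P x4 y4" "cg P x5 y5" "cg P x6 y6"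
    and "good P x1" "good P x2" "good P x3" "good P x4" "good P x5" "good P x6"
    and "good P y1" "good P y2" "good P y3" "good P y4" "good P y5" "good P y6"
  shows "cg P (x1*x2*x3*x4*x5*x6) (y1*y2*y3*y4*y5*y6)"
  using assms by (intro cg_mult good_mult) (assumption | (intro good_mult; assumption))+

lemma prod_powi:
  assumes x: "(x::'a::field) \<noteq> 0" shows "(\<Prod>j\<in>S. x powi f j) = x powi (\<Sum>j\<in>S. f j)"
proof (induction S rule: infinite_finite_induct)
  case (insert a F)
  have "x powi (f a + sum f F) = x powi f a * x powi sum f F" using x by (rule power_int_add[OF disjI1])
  then show ?case using insert by simp
qed simp_all

lemma sum_lin: "(\<Sum>j\<in>{k..<k+m}. (-5 - 12 * int j)) = - (int m * (5 + 12 * int k + 6 * (int m - 1)))"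
proof (induction m)
  case (Suc m)
  have "{k..<k + Suc m} = insert (k+m) {k..<k+m}" by auto
  then have "(\<Sum>j\<in>{k..<k+Suc m}. (-5 - 12 * int j)) = (-5 - 12 * int (k+m)) + (\<Sum>j\<in>{k..<k+m}. (-5 - 12 * int j))"
    by simp
  also have "\<dots> = - (int (Suc m) * (5 + 12 * int k + 6 * (int (Suc m) - 1)))"
    unfolding Suc.IH by (simp add: algebra_simps)
  finally show ?case .
qed simp

lemma adm_list:
  assumes "n > 0"
  shows "adm n ind_a" "adm n (inverse ind_a)" "adm n (inverse ind_b)" "adm n ind_c" "adm n ind_d" "adm n 1"
  using assms ind_nz ind_a_pow ind_b_pow ind_c_pow ind_d_pow
  by (auto simp: adm_def power_inverse)

lemma ABCD_nz: "A \<noteq> 0" "B \<noteq> 0" "C \<noteq> 0" "D \<noteq> 0"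
  using ind_nz by (simp_all add: ABCD)

lemma perj: "zz * ((- K' ind_a * q) * (- K' (inverse ind_a) * q) * (- K' (inverse ind_b) * q) *
    (- K' ind_c * q) * (- K' ind_d * q) * (- K' 1 * q)) = Q^7 * q^6"
proof -
  have "zz * ((- K' ind_a * q) * (- K' (inverse ind_a) * q) * (- K' (inverse ind_b) * q) *
    (- K' ind_c * q) * (- K' ind_d * q) * (- K' 1 * q)) =
    B * Q^7 / (C * D) * ((- A * q) * (- inverse A * q) * (- inverse B * q) * (- C * q) * (- D * q) * (- q))"
    by (simp add: zz_def K'_inverse ABCD)
  also have "\<dots> = Q^7 * q^6" using ABCD_nz by (simp add: field_simps eval_nat_numeral)
  finally show ?thesis .
qed

context
  fixes n :: nat
  assumes n1: "n > 1" and odd: "odd n"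
begin

lemma n0': "n > 0" using n1 by simp

lemma good_zz: "good (PP n) zz"
  unfolding zz_def ABCD
  by (intro good_divide good_mult good_power unitp_good unitp_Q unitp_mult unitp_const n1)
     (use ind_nz in auto)

lemma unit_1Q: "unitp (PP n) (1 - Q)"
  using unit_lin[OF n1, of 1 1] n1 by (simp add: powi_one)

lemma good_qint: "good (PP n) (qint Q e)"
  unfolding qint_def by (intro good_divide good_diff good_1 good_Qpi n1 unit_1Q)

lemma good_EE: "k < n \<Longrightarrow> good (PP n) (EE k)"
  unfolding EE_def using adm_list[OF n0'] by (intro good_mult good_R[OF n1 odd]) auto

lemma good_TT: "k < n \<Longrightarrow> good (PP n) (TT k)"
  unfolding TT_def by (intro good_mult good_EE good_qint good_power good_zz)

end



context
  fixes n :: nat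
  assumes n1: "n > 1" and odd: "odd n"
begin

lemma qint_refl:
  assumes k: "k \<le> NN n"
  shows "cg (PP n) (qint Q (4 * int (NN n - k) - 1)) (- (Q powi (1 - 4 * int k)) * qint Q (4 * int k - 1))"
proof -
  have i1: "int (NN n - k) = int (NN n) - int k" using k by simp
  have i2: "2 * int (NN n) = int n + 1" using NN2[OF n1 odd] by linarith
  have gen: "\<And>x. 2 * x = int n + 1 \<Longrightarrow> (4 * (x - int k) - 1) - (1 - 4 * int k) = int n * 2"
    by presburger
  have "int n dvd (4 * int (NN n - k) - 1) - (1 - 4 * int k)" unfolding i1 gen[OF i2] by simp
  then have "cg (PP n) (Q powi (4 * int (NN n - k) - 1)) (Q powi (1 - 4 * int k))" by (rule cg_Qpi[OF n1])
  then have "cg (PP n) (1 - 1 * Q powi (4 * int (NN n - k) - 1)) (1 - 1 * Q powi (1 - 4 * int k))"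
    by (rule cg_lin) simp
  then have "cg (PP n) ((1 - Q powi (4 * int (NN n - k) - 1)) * inverse (1 - Q)) ((1 - Q powi (1 - 4 * int k)) * inverse (1 - Q))"
    by (intro cg_mult cg_refl good_diff good_1 good_Qpi n1 unitp_good_inv unit_1Q[OF n1 odd]) simp
  moreover have "(1 - Q powi (1 - 4 * int k)) * inverse (1 - Q) = - (Q powi (1 - 4 * int k)) * qint Q (4 * int k - 1)"
  proof -
    have e: "Q powi (1 - 4 * int k) * Q powi (4 * int k - 1) = 1"
      using Q_nz by (subst power_int_add[symmetric]) auto
    have "- (Q powi (1 - 4 * int k)) * qint Q (4 * int k - 1) =
        (Q powi (1 - 4 * int k) * Q powi (4 * int k - 1) - Q powi (1 - 4 * int k)) * inverse (1 - Q)"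
      by (simp add: qint_def divide_inverse algebra_simps)
    also have "\<dots> = (1 - Q powi (1 - 4 * int k)) * inverse (1 - Q)" unfolding e ..
    finally show ?thesis by simp
  qed
  ultimately show ?thesis by (simp add: qint_def divide_inverse)
qed

lemma good_W: "good (PP n) (\<Prod>j\<in>I. - K' c * Q powi (-2 - 2*int j))"
  by (intro good_prod good_mult good_uminus good_Qpi n1) (simp add: K'_def)

lemma REF:
  assumes k: "k \<le> NN n - k"
  shows "cg (PP n) (TT (NN n - k)) (- TT k)"
proof -
  define m where "m = NN n - 2*k"
  define I where "I = {k..<NN n - k}"
  have Ikm: "I = {k..<k+m}" using k by (simp add: I_def m_def)
  have cardI: "card I = m" using Ikm by simp
  have NNk: "NN n - k = k + m" using k by (simp add: m_def)
  have kn1: "NN n - k < n" "k < n" using NN_lt[OF n1 odd] k by linarith+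
  define Wc where "Wc c = (\<Prod>j\<in>I. - K' c * Q powi (-2 - 2*int j))" for c
  have gW: "good (PP n) (Wc c)" for c unfolding Wc_def by (rule good_W)
  note adm = adm_list[OF n0'[OF n1 odd]]
  have pr: "cg (PP n) (R c (NN n - k)) (R c k * Wc c)" if "adm n c" for c
    using PR[OF n1 odd that k] by (simp add: Wc_def I_def)
  have gl: "good (PP n) (R c (NN n - k))" if "adm n c" for c using good_R[OF n1 odd that kn1(1)] .
  have gr: "good (PP n) (R c k * Wc c)" if "adm n c" for c using good_R[OF n1 odd that kn1(2)] gW by (rule good_mult)
  have cgE: "cg (PP n) (EE (NN n - k)) ((R ind_a k * Wc ind_a) * (R (inverse ind_a) k * Wc (inverse ind_a)) *
     (R (inverse ind_b) k * Wc (inverse ind_b)) * (R ind_c k * Wc ind_c) * (R ind_d k * Wc ind_d) * (R 1 k * Wc 1))"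
    unfolding EE_def using adm by (intro cg_mult6 pr gl gr)
  define Wall where "Wall = Wc ind_a * Wc (inverse ind_a) * Wc (inverse ind_b) * Wc ind_c * Wc ind_d * Wc 1"
  have gWall: "good (PP n) Wall" unfolding Wall_def using gW by (intro good_mult)
  have re: "(R ind_a k * Wc ind_a) * (R (inverse ind_a) k * Wc (inverse ind_a)) *
     (R (inverse ind_b) k * Wc (inverse ind_b)) * (R ind_c k * Wc ind_c) * (R ind_d k * Wc ind_d) * (R 1 k * Wc 1)
     = EE k * Wall" by (simp add: EE_def Wall_def mult_ac)
  have cgE': "cg (PP n) (EE (NN n - k)) (EE k * Wall)" using cgE unfolding re .
  have Wz: "Wall * zz ^ m = Q powi (\<Sum>j\<in>I. (-5 - 12 * int j))"
  proof -
    have "(\<Prod>j\<in>I. zz * ((- K' ind_a * Q powi (-2 - 2*int j)) * (- K' (inverse ind_a) * Q powi (-2 - 2*int j)) *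
        (- K' (inverse ind_b) * Q powi (-2 - 2*int j)) * (- K' ind_c * Q powi (-2 - 2*int j)) *
        (- K' ind_d * Q powi (-2 - 2*int j)) * (- K' 1 * Q powi (-2 - 2*int j))))
        = zz ^ card I * Wall"
      unfolding Wall_def Wc_def by (simp only: prod.distrib prod_constant)
    moreover have "(\<Prod>j\<in>I. zz * ((- K' ind_a * Q powi (-2 - 2*int j)) * (- K' (inverse ind_a) * Q powi (-2 - 2*int j)) *
        (- K' (inverse ind_b) * Q powi (-2 - 2*int j)) * (- K' ind_c * Q powi (-2 - 2*int j)) *
        (- K' ind_d * Q powi (-2 - 2*int j)) * (- K' 1 * Q powi (-2 - 2*int j))))
        = (\<Prod>j\<in>I. Q powi (-5 - 12 * int j))"
    proof (rule prod.cong[OF refl])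
      fix j
      have "Q^7 * (Q powi (-2 - 2*int j))^6 = Q powi 7 * Q powi ((-2 - 2*int j) * 6)"
        by (simp add: power_int_power')
      also have "\<dots> = Q powi (-5 - 12 * int j)"
        using Q_nz by (subst power_int_add[symmetric]) (auto simp: algebra_simps)
      finally show "zz * ((- K' ind_a * Q powi (-2 - 2*int j)) * (- K' (inverse ind_a) * Q powi (-2 - 2*int j)) *
        (- K' (inverse ind_b) * Q powi (-2 - 2*int j)) * (- K' ind_c * Q powi (-2 - 2*int j)) *
        (- K' ind_d * Q powi (-2 - 2*int j)) * (- K' 1 * Q powi (-2 - 2*int j))) = Q powi (-5 - 12 * int j)"
        unfolding perj .
    qed
    ultimately show ?thesis using Q_nz by (simp add: prod_powi cardI mult.commute)
  qed
  define S where "S = (\<Sum>j\<in>I. (-5 - 12 * int j))"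
  have Sval: "S = - (int m * (5 + 12 * int k + 6 * (int m - 1)))" unfolding S_def Ikm by (rule sum_lin)
  have hn: "int n = 2 * int m + 4 * int k - 1"
  proof -
    have "2 * NN n = n + 1" by (rule NN2[OF n1 odd])
    then show ?thesis using k unfolding m_def by linarith
  qed
  have "1 - 4 * int k + S = int n * (- (3 * int m + 1))"
    unfolding Sval hn by (simp add: algebra_simps)
  then have dvdS: "int n dvd (1 - 4 * int k + S) - 0" by simp
  have cgQ: "cg (PP n) (Q powi (1 - 4 * int k + S)) 1"
    using cg_Qpi[OF n1 dvdS] by simp
  have c1: "cg (PP n) (qint Q (4 * int (NN n - k) - 1) * EE (NN n - k))
      ((- (Q powi (1 - 4 * int k)) * qint Q (4 * int k - 1)) * (EE k * Wall))"
    using qint_refl k cgE' good_qint[OF n1 odd] good_EE[OF n1 odd kn1(2)] gWall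
    by (intro cg_mult good_mult) auto
  have c2: "cg (PP n) (TT (NN n - k))
      ((- (Q powi (1 - 4 * int k)) * qint Q (4 * int k - 1)) * (EE k * Wall) * zz ^ (NN n - k))"
    unfolding TT_def
    by (rule cg_mult[OF c1 cg_refl good_mult[OF good_qint[OF n1 odd] good_EE[OF n1 odd kn1(1)]]
        good_power[OF good_zz[OF n1 odd]]])
  have e3: "(- (Q powi (1 - 4 * int k)) * qint Q (4 * int k - 1)) * (EE k * Wall) * zz ^ (NN n - k)
      = (- TT k) * (Q powi (1 - 4 * int k) * (Wall * zz ^ m))"
    unfolding TT_def NNk power_add by (simp add: mult_ac)
  have e4: "Q powi (1 - 4 * int k) * (Wall * zz ^ m) = Q powi (1 - 4 * int k + S)"
    unfolding Wz S_def using Q_nz by (subst power_int_add) auto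
  have c3: "cg (PP n) ((- TT k) * Q powi (1 - 4 * int k + S)) ((- TT k) * 1)"
    using cgQ good_TT[OF n1 odd kn1(2)] by (intro cg_mult cg_refl good_uminus) auto
  show ?thesis using cg_trans[OF c2[unfolded e3 e4] c3] by simp
qed

end



lemma K'_one_div: "K' (1 / a) = 1 / K' a"
  using K'_inverse[of a] by (simp add: inverse_eq_divide)

lemma K'_add: "K' (a + b) = K' a + K' b"
  by (simp add: K'_def flip: to_fract_add)

lemma summand_eq: "qint Q (4 * int k - 1) *
       (qpoch (A / Q) (Q^2) k * qpoch (1 / (Q * A)) (Q^2) k * qpoch (1 / (Q * B)) (Q^2) k *
        qpoch (C / Q) (Q^2) k * qpoch (D / Q) (Q^2) k * qpoch (1 / Q) (Q^2) k) /
       (qpoch (Q^2 / A) (Q^2) k * qpoch (A * Q^2) (Q^2) k * qpoch (B * Q^2) (Q^2) k *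
        qpoch (Q^2 / C) (Q^2) k * qpoch (Q^2 / D) (Q^2) k * qpoch (Q^2) (Q^2) k) *
       (B * Q^7 / (C * D)) ^ k = TT k"
proof -
  have c1: "qpoch (A / Q) (Q^2) k = qpoch (K' ind_a / Q) (Q^2) k" by (simp add: ABCD)
  have c2: "qpoch (1 / (Q * A)) (Q^2) k = qpoch (K' (inverse ind_a) / Q) (Q^2) k"
    by (simp add: ABCD K'_inverse K'_one_div field_simps)
  have c3: "qpoch (1 / (Q * B)) (Q^2) k = qpoch (K' (inverse ind_b) / Q) (Q^2) k"
    by (simp add: ABCD K'_inverse K'_one_div field_simps)
  have c4: "qpoch (C / Q) (Q^2) k = qpoch (K' ind_c / Q) (Q^2) k" by (simp add: ABCD)
  have c5: "qpoch (D / Q) (Q^2) k = qpoch (K' ind_d / Q) (Q^2) k" by (simp add: ABCD)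
  have c6: "qpoch (1 / Q) (Q^2) k = qpoch (K' 1 / Q) (Q^2) k" by simp
  have d1: "qpoch (Q^2 / A) (Q^2) k = qpoch (Q^2 / K' ind_a) (Q^2) k" by (simp add: ABCD)
  have d2: "qpoch (A * Q^2) (Q^2) k = qpoch (Q^2 / K' (inverse ind_a)) (Q^2) k"
    by (simp add: ABCD K'_inverse K'_one_div field_simps)
  have d3: "qpoch (B * Q^2) (Q^2) k = qpoch (Q^2 / K' (inverse ind_b)) (Q^2) k"
    by (simp add: ABCD K'_inverse K'_one_div field_simps)
  have d4: "qpoch (Q^2 / C) (Q^2) k = qpoch (Q^2 / K' ind_c) (Q^2) k" by (simp add: ABCD)
  have d5: "qpoch (Q^2 / D) (Q^2) k = qpoch (Q^2 / K' ind_d) (Q^2) k" by (simp add: ABCD)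
  have d6: "qpoch (Q^2) (Q^2) k = qpoch (Q^2 / K' 1) (Q^2) k" by simp
  have fr: "\<And>x1 x2 x3 x4 x5 x6 y1 y2 y3 y4 y5 y6 :: ratfun.
      (x1*x2*x3*x4*x5*x6) / (y1*y2*y3*y4*y5*y6) = (x1/y1)*(x2/y2)*(x3/y3)*(x4/y4)*(x5/y5)*(x6/y6)"
    by (simp add: divide_inverse inverse_mult_distrib mult_ac)
  show ?thesis
    unfolding c1 c2 c3 c4 c5 c6 d1 d2 d3 d4 d5 d6 fr
    unfolding TT_def EE_def R_def zz_def by (simp add: mult_ac)
qed

context
  fixes n :: nat
  assumes n1: "n > 1" and odd: "odd n"
begin

lemma unitp_2: "unitp (PP n) 2"
proof -
  have "K' 2 = K' 1 + K' 1" unfolding one_add_one[symmetric] by (rule K'_add)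
  then have "(2::ratfun) = K' 2" by simp
  moreover have "(2::coeffK) \<noteq> 0" using ofnat_K[of 2] by simp
  ultimately show ?thesis using unitp_const[OF n1, of 2] by metis
qed

lemma zr_half: "zr (PP n) (\<Sum>k=0..NN n. TT k)"
proof -
  define S where "S = (\<Sum>k=0..NN n. TT k)"
  have "(\<Sum>k=0..NN n. TT (NN n - k)) = S" unfolding S_def
    by (rule sum.reindex_bij_witness[of _ "\<lambda>k. NN n - k" "\<lambda>k. NN n - k"]) auto
  moreover have "cg (PP n) (\<Sum>k=0..NN n. TT (NN n - k)) (\<Sum>k=0..NN n. - TT k)"
  proof (rule cg_sum)
    fix k assume k: "k \<in> {0..NN n}"
    show "cg (PP n) (TT (NN n - k)) (- TT k)"
    proof (cases "k \<le> NN n - k")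
      case True then show ?thesis by (rule REF[OF n1 odd])
    next
      case False
      then have "NN n - k \<le> NN n - (NN n - k)" using k by auto
      then have "cg (PP n) (TT (NN n - (NN n - k))) (- TT (NN n - k))" by (rule REF[OF n1 odd])
      moreover have "NN n - (NN n - k) = k" using k by auto
      ultimately show ?thesis by (simp add: add.commute)
    qed
  qed
  moreover have "(\<Sum>k=0..NN n. - TT k) = - S" by (simp add: S_def sum_negf)
  ultimately have "cg (PP n) S (- S)" by simp
  then have "zr (PP n) (S + S)" by simp
  then have "zr (PP n) ((S + S) * inverse 2)" using unitp_good_inv[OF unitp_2] by (rule zr_mult)
  moreover have "(S + S) * inverse 2 = S" by simp
  ultimately show ?thesis by (simp add: S_def)
qed

lemma zr_tail:
  assumes k: "NN n < k" "k < n"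
  shows "zr (PP n) (TT k)"
proof -
  have x: "zr (PP n) (Xf 1 (NN n))"
  proof -
    have "2 * int (NN n) - 1 = int n" using NN2[OF n1 odd] by linarith
    then have "Xf 1 (NN n) = - (Q^n - 1)" by (simp add: Xf_def)
    then show ?thesis using zr_uminus[OF cg_Qn[OF n1]] by simp
  qed
  have "(\<Prod>j<k. Xf 1 j) = Xf 1 (NN n) * (\<Prod>j\<in>{..<k} - {NN n}. Xf 1 j)"
    using k by (intro prod.remove) auto
  then have zx: "zr (PP n) (\<Prod>j<k. Xf 1 j)"
    using x by (simp add: zr_mult good_prod good_Xf[OF n1 odd])
  have "zr (PP n) ((\<Prod>j<k. Xf 1 j) * inverse (\<Prod>j<k. Yf 1 j))"
    using zx unitp_good_inv[OF unit_den[OF n1 odd adm_list(6)[OF n0'[OF n1 odd]] k(2)]] by (rule zr_mult)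
  then have zR: "zr (PP n) (R 1 k)" by (simp add: R_eq divide_inverse)
  note adm = adm_list[OF n0'[OF n1 odd]]
  have g5: "good (PP n) (R ind_a k * R (inverse ind_a) k * R (inverse ind_b) k * R ind_c k * R ind_d k)"
    using adm k by (intro good_mult good_R[OF n1 odd]) auto
  have "zr (PP n) (qint Q (4 * int k - 1) * ((R ind_a k * R (inverse ind_a) k * R (inverse ind_b) k * R ind_c k * R ind_d k) * R 1 k) * zz ^ k)"
    by (intro zr_mult zr_mult2 good_qint[OF n1 odd] g5 zR good_power good_zz[OF n1 odd])
  then show ?thesis by (simp add: TT_def EE_def)
qed

end

theorem lemma2p1:
  fixes n M :: nat
  assumes "n > 1" and "odd n"
    and "M = (n + 1) div 2 \<or> M = n - 1"
  shows "cong_rf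
    (\<Sum>k=0..M. qint Q (4 * int k - 1) *
       (qpoch (A / Q) (Q^2) k * qpoch (1 / (Q * A)) (Q^2) k * qpoch (1 / (Q * B)) (Q^2) k *
        qpoch (C / Q) (Q^2) k * qpoch (D / Q) (Q^2) k * qpoch (1 / Q) (Q^2) k) /
       (qpoch (Q^2 / A) (Q^2) k * qpoch (A * Q^2) (Q^2) k * qpoch (B * Q^2) (Q^2) k *
        qpoch (Q^2 / C) (Q^2) k * qpoch (Q^2 / D) (Q^2) k * qpoch (Q^2) (Q^2) k) *
       (B * Q^7 / (C * D)) ^ k)
    0 (map_poly of_int (cyclo n))"
proof -
  have n1: "n > 1" and odd: "odd n" using assms by auto
  have "zr (PP n) (\<Sum>k=0..M. TT k)"
  proof (cases "M = (n + 1) div 2")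
    case True
    then show ?thesis using zr_half[OF n1 odd] by simp
  next
    case False
    then have M: "M = n - 1" using assms(3) by auto
    have NNle: "NN n \<le> n - 1" using NN_lt[OF n1 odd] by simp
    have "{0..M} = {0..NN n} \<union> {Suc (NN n)..n-1}" using NNle M by auto
    then have "(\<Sum>k=0..M. TT k) = (\<Sum>k=0..NN n. TT k) + (\<Sum>k=Suc (NN n)..n-1. TT k)"
      by (simp add: sum.union_disjoint)
    moreover have "zr (PP n) (\<Sum>k=Suc (NN n)..n-1. TT k)"
      using n1 by (intro zr_sum zr_tail[OF n1 odd]) auto
    ultimately show ?thesis using zr_half[OF n1 odd] by (simp add: zr_add)
  qed
  then show ?thesis unfolding summand_eq by (rule zr_cong_rf)
qed


end
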